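(* Let $\lambda\in[0,1]$. For every $\alpha$ with $1\le\alpha<\frac{\sqrt{\lambda^2-2\lambda+5}-\lambda+1}{2}$, there exists an instance with the weighted single metric loss with parameter $\lambda$ in which no clustering is in the $\alpha$-core.
   Context: Instance: finite nonempty set $\mathcal{N}$ of $n$ agents, finite nonempty set $\mathcal{M}$ of feasible centers, positive integer $k$, pseudometric $d$ on $\mathcal{N}\cup\mathcal{M}$. Weighted single metric loss: $\ell_i(C,x)=\lambda\max_{j\in C}d(i,j)+(1-\lambda)d(i,x)$ for $i\in C\subseteq\mathcal{N}$, $x\in\mathcal{M}$. A clustering is $\mathcal{X}=\{(C_1,x_1),\dots,(C_k,x_k)\}$ with $C_t$ pairwise disjoint (some possibly empty), union $\mathcal{N}$, $x_t\in\mathcal{M}$; $\ell_i(\mathcal{X})=\ell_i(C_t,x_t)$ where $i\in C_t$. For $\alpha\ge1$, $\mathcal{X}$ is in the $\alpha$-core if there is no $S\subseteq\mathcal{N}$ with $|S|\ge n/k$ and $y\in\mathcal{M}$ with $\alpha\,\ell_i(S,y)<\ell_i(\mathcal{X})$ for all $i\in S$. *)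

theory Defs
  imports Complex_Main
begin

definition pseudometric_on :: "'a set \<Rightarrow> ('a \<Rightarrow> 'a \<Rightarrow> real) \<Rightarrow> bool" where
  "pseudometric_on A d \<longleftrightarrow>
     (\<forall>x\<in>A. d x x = 0) \<and>
     (\<forall>x\<in>A. \<forall>y\<in>A. d x y \<ge> 0 \<and> d x y = d y x) \<and>
     (\<forall>x\<in>A. \<forall>y\<in>A. \<forall>z\<in>A. d x z \<le> d x y + d y z)"

definition wsm_loss :: "real \<Rightarrow> ('a \<Rightarrow> 'a \<Rightarrow> real) \<Rightarrow> 'a set \<Rightarrow> 'a \<Rightarrow> 'a \<Rightarrow> real" where
  "wsm_loss lam d C x i = lam * Max ((\<lambda>j. d i j) ` C) + (1 - lam) * d i x"

definition is_clustering :: "'a set \<Rightarrow> 'a set \<Rightarrow> nat \<Rightarrow> (nat \<Rightarrow> 'a set) \<Rightarrow> (nat \<Rightarrow> 'a) \<Rightarrow> bool" where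
  "is_clustering N M k C X \<longleftrightarrow>
     (\<forall>t<k. \<forall>s<k. t \<noteq> s \<longrightarrow> C t \<inter> C s = {}) \<and>
     (\<Union>t<k. C t) = N \<and>
     (\<forall>t<k. X t \<in> M)"

definition clustering_loss ::
  "real \<Rightarrow> ('a \<Rightarrow> 'a \<Rightarrow> real) \<Rightarrow> nat \<Rightarrow> (nat \<Rightarrow> 'a set) \<Rightarrow> (nat \<Rightarrow> 'a) \<Rightarrow> 'a \<Rightarrow> real" where
  "clustering_loss lam d k C X i =
     (let t = (THE t. t < k \<and> i \<in> C t) in wsm_loss lam d (C t) (X t) i)"

definition in_alpha_core ::
  "real \<Rightarrow> ('a \<Rightarrow> 'a \<Rightarrow> real) \<Rightarrow> 'a set \<Rightarrow> 'a set \<Rightarrow> nat \<Rightarrow> real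
     \<Rightarrow> (nat \<Rightarrow> 'a set) \<Rightarrow> (nat \<Rightarrow> 'a) \<Rightarrow> bool" where
  "in_alpha_core lam d N M k alpha C X \<longleftrightarrow>
     is_clustering N M k C X \<and>
     \<not> (\<exists>S y. S \<subseteq> N \<and> real (card S) \<ge> real (card N) / real k \<and> y \<in> M \<and>
            (\<forall>i\<in>S. alpha * wsm_loss lam d S y i < clustering_loss lam d k C X i))"

end

theory Submission
  imports Defs
begin


lemma quad_from_bound:
  fixes lam alpha :: real
  assumes "0 \<le> lam" "lam \<le> 1" "1 \<le> alpha"
    and "alpha < (sqrt (lam\<^sup>2 - 2 * lam + 5) - lam + 1) / 2"
  shows "alpha * alpha + (lam - 1) * alpha < 1" and "lam < 1"
proof -
  have "2 * alpha + lam - 1 < sqrt (lam\<^sup>2 - 2 * lam + 5)" using assms(4) by (simp add: field_simps)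
  moreover have "0 \<le> 2 * alpha + lam - 1" using assms by linarith
  ultimately have lt: "(2 * alpha + lam - 1)^2 < (sqrt (lam\<^sup>2 - 2 * lam + 5))^2"
    by (meson power_strict_mono zero_less_numeral)
  have e: "lam\<^sup>2 - 2 * lam + 5 = (lam - 1)^2 + 4" by (simp add: power2_eq_square algebra_simps)
  have "lam\<^sup>2 - 2 * lam + 5 \<ge> 0" unfolding e by (simp add: add_nonneg_nonneg)
  then have sq: "(sqrt (lam\<^sup>2 - 2 * lam + 5))^2 = lam\<^sup>2 - 2 * lam + 5"
    by simp
  have "(2 * alpha + lam - 1)^2 < lam\<^sup>2 - 2 * lam + 5" using lt sq by simp
  then show q: "alpha * alpha + (lam - 1) * alpha < 1" by (simp add: power2_eq_square algebra_simps)
  show "lam < 1"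
  proof (rule ccontr)
    assume "\<not> lam < 1" then have "lam = 1" using assms by simp
    moreover have "1 * 1 \<le> alpha * alpha" using assms(3) by (intro mult_mono) auto
    ultimately show False using q by simp
  qed
qed

lemma G_pos:
  fixes lam alpha :: real
  assumes "0 \<le> lam" "lam < 1" "1 \<le> alpha"
    and q: "alpha * alpha + (lam - 1) * alpha < 1"
  shows "-(1+lam)*alpha*alpha + (1-lam)*alpha + 2 > 0"
proof -
  have "0 \<le> alpha * (alpha - 1)" using assms by simp
  then have la: "lam * alpha < 1" using q by (simp add: algebra_simps)
  have "(1+lam) * (alpha * alpha + (lam - 1) * alpha) < (1+lam) * 1"
    using q assms by (intro mult_strict_left_mono) auto
  moreover have "0 < (1 - lam) * (1 - lam * alpha)" using la assms by simp
  ultimately show ?thesis by (simp add: algebra_simps)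
qed

lemma param_exists:
  fixes lam alpha :: real
  assumes "0 \<le> lam" "lam < 1" "1 \<le> alpha"
    and q: "alpha * alpha + (lam - 1) * alpha < 1"
  shows "\<exists>t. 1 \<le> t \<and> alpha * (1 + lam * t) < lam + t \<and> alpha * (lam + t) < 2 + t - lam"
proof -
  have "0 \<le> alpha * (alpha - 1)" using assms by simp
  then have la: "lam * alpha < 1" using q by (simp add: algebra_simps)
  define u where "u = 1 - alpha * lam"
  have u: "u > 0" using la by (simp add: u_def mult.commute)
  define G where "G = (2 - lam - alpha * lam) * u - (alpha - 1) * (alpha - lam)"
  have "G = (1 - lam) * (-(1+lam)*alpha*alpha + (1-lam)*alpha + 2)"
    by (simp add: G_def u_def algebra_simps)
  then have G: "G > 0" using G_pos[OF assms] assms by simp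
  define t where "t = (alpha - lam) / u + G / (alpha * u)"
  have a0: "alpha > 0" using assms by simp
  have "0 \<le> (alpha - 1) * (1 + lam)" using assms by simp
  then have t0: "(alpha - lam) / u \<ge> 1" using u assms
    by (simp add: u_def field_simps algebra_simps)
  have g0: "G / (alpha * u) > 0" using G u a0 by simp
  have "t * u = (alpha - lam) + G / alpha" using u a0 by (simp add: t_def field_simps)
  moreover have "G / alpha > 0" using G a0 by simp
  ultimately have tu: "t * u > alpha - lam" by simp
  have "(alpha - 1) * (G / (alpha * u)) < G / u"
    using G u a0 by (simp add: field_simps)
  then have "(alpha - 1) * t < (alpha - 1) * ((alpha - lam) / u) + G / u"
    by (simp add: t_def algebra_simps)
  also have "\<dots> = 2 - lam - alpha * lam" using u by (simp add: G_def field_simps)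
  finally have tb: "(alpha - 1) * t < 2 - lam - alpha * lam" .
  show ?thesis
  proof (intro exI conjI)
    show "1 \<le> t" using t0 g0 by (simp add: t_def)
    show "alpha * (1 + lam * t) < lam + t" using tu by (simp add: u_def algebra_simps)
    show "alpha * (lam + t) < 2 + t - lam" using tb by (simp add: algebra_simps)
  qed
qed


lemma cl_loss:
  assumes "is_clustering N M k C X" "i \<in> N"
  shows "\<exists>\<tau><k. i \<in> C \<tau> \<and> clustering_loss lam d k C X i = wsm_loss lam d (C \<tau>) (X \<tau>) i"
proof -
  from assms obtain \<tau> where t: "\<tau> < k" "i \<in> C \<tau>" unfolding is_clustering_def by blast
  have "(THE t. t < k \<and> i \<in> C t) = \<tau>"
  proof (rule the_equality)
    show "\<tau> < k \<and> i \<in> C \<tau>" using t by simp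
    fix s assume "s < k \<and> i \<in> C s"
    then show "s = \<tau>" using t assms(1) unfolding is_clustering_def by blast
  qed
  then show ?thesis using t by (auto simp: clustering_loss_def)
qed

lemma wsm_ge:
  assumes "finite A" "a \<in> A" "b \<in> A" "0 \<le> lam"
  shows "lam * d a b + (1 - lam) * d a x \<le> wsm_loss lam d A x a"
proof -
  have "d a b \<le> Max ((\<lambda>j. d a j) ` A)" using assms by (intro Max_ge) auto
  then have "lam * d a b \<le> lam * Max ((\<lambda>j. d a j) ` A)" using assms(4) by (rule mult_left_mono)
  then show ?thesis by (simp add: wsm_loss_def)
qed

lemma wsm_pair:
  assumes "d a a = 0" "0 \<le> d a b"
  shows "wsm_loss lam d {a, b} y a = lam * d a b + (1 - lam) * d a y"
  using assms by (simp add: wsm_loss_def max_def)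

lemma triangle_block:
  fixes lam alpha e D B t :: real and a c :: "nat \<Rightarrow> nat"
  assumes clus: "is_clustering N M k C X" and finN: "finite N"
  and aN: "\<And>i. i<3 \<Longrightarrow> a i \<in> N" and ainj: "\<And>i i'. i<3 \<Longrightarrow> i'<3 \<Longrightarrow> a i = a i' \<Longrightarrow> i = i'"
  and cM: "\<And>j. j<3 \<Longrightarrow> c j \<in> M"
  and thr: "real (card N) / real k \<le> 2"
  and daa: "\<And>i i'. i<3 \<Longrightarrow> i'<3 \<Longrightarrow> i\<noteq>i' \<Longrightarrow> d (a i) (a i') = e"
  and dself: "\<And>i. i<3 \<Longrightarrow> d (a i) (a i) = 0"
  and dac: "\<And>i j. i<3 \<Longrightarrow> j<3 \<Longrightarrow> d (a i) (c j) = (if i=j then 1 else if (i,j) \<in> {(1,0),(2,1),(0,2)} then t else D)"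
  and dN: "\<And>i b. i<3 \<Longrightarrow> b\<in>N \<Longrightarrow> b \<noteq> a i \<Longrightarrow> e \<le> d (a i) b"
  and uniq: "\<And>\<tau> \<tau>'. \<tau><k \<Longrightarrow> \<tau>'<k \<Longrightarrow> X \<tau> \<in> c`{..<3} \<Longrightarrow> X \<tau>' \<in> c`{..<3} \<Longrightarrow> \<tau> = \<tau>'"
  and far: "\<And>i \<tau>. i<3 \<Longrightarrow> \<tau><k \<Longrightarrow> X \<tau> \<notin> c`{..<3} \<Longrightarrow> B \<le> d (a i) (X \<tau>)"
  and lam: "0 \<le> lam" "lam \<le> 1" and a0: "0 \<le> alpha"
  and e0: "0 \<le> e" and t1: "1 \<le> t" and tD: "t \<le> D"
  and hA: "alpha * (lam*e + (1-lam)*1) < lam*e + (1-lam)*t"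
  and hB: "alpha * (lam*e + (1-lam)*t) < lam*e + (1-lam)*D"
  and hBig: "alpha * (lam*e + (1-lam)*D) < (1-lam)*B"
  shows "\<exists>S y. S \<subseteq> N \<and> real (card S) \<ge> real (card N) / real k \<and> y \<in> M \<and>
     (\<forall>i\<in>S. alpha * wsm_loss lam d S y i < clustering_loss lam d k C X i)"
proof -
  define L where "L = clustering_loss lam d k C X"
  have "\<forall>i. \<exists>\<tau>. i < 3 \<longrightarrow> \<tau> < k \<and> a i \<in> C \<tau> \<and> L (a i) = wsm_loss lam d (C \<tau>) (X \<tau>) (a i)"
    using cl_loss[OF clus aN] unfolding L_def by metis
  then obtain \<tau> where \<tau>: "\<And>i. i<3 \<Longrightarrow> \<tau> i < k \<and> a i \<in> C (\<tau> i) \<and> L (a i) = wsm_loss lam d (C (\<tau> i)) (X (\<tau> i)) (a i)"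
    by metis
  have CN: "\<And>s. s < k \<Longrightarrow> C s \<subseteq> N" using clus unfolding is_clustering_def by blast
  have finC: "\<And>i. i<3 \<Longrightarrow> finite (C (\<tau> i))" using CN \<tau> finN finite_subset by blast
  define loc where "loc i \<longleftrightarrow> X (\<tau> i) \<in> c`{..<3}" for i
  have nl: "(1-lam)*B \<le> L (a i)" if "i<3" "\<not> loc i" for i
  proof -
    have "lam * d (a i) (a i) + (1 - lam) * d (a i) (X (\<tau> i)) \<le> L (a i)"
      using wsm_ge[OF finC[OF that(1)], of "a i" "a i" lam d] \<tau>[OF that(1)] lam by simp
    moreover have "(1-lam)*B \<le> (1-lam) * d (a i) (X (\<tau> i))"
      using far[of i "\<tau> i"] that \<tau>[OF that(1)] lam unfolding loc_def by (intro mult_left_mono) auto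
    ultimately show ?thesis using dself[OF that(1)] by simp
  qed
  have lc: "lam*e + (1-lam)*d (a i) (X (\<tau> i)) \<le> L (a i)" if "i<3" "b \<in> C (\<tau> i)" "b \<noteq> a i" for i b
  proof -
    have "lam * d (a i) b + (1 - lam) * d (a i) (X (\<tau> i)) \<le> L (a i)"
      using wsm_ge[OF finC[OF that(1)], of "a i" b lam d] \<tau>[OF that(1)] lam that by simp
    moreover have "lam * e \<le> lam * d (a i) b"
      using dN[of i b] that CN \<tau>[OF that(1)] lam by (intro mult_left_mono) auto
    ultimately show ?thesis by simp
  qed
  have pl: "wsm_loss lam d {a i, a i'} y (a i) = lam*e + (1-lam)*d (a i) y"
    if "i<3" "i'<3" "i\<noteq>i'" for i i' y
    using wsm_pair[of d "a i" "a i'" lam y] dself daa that e0 by simp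
  have crd: "real (card {a i, a i'}) \<ge> real (card N) / real k" if "i<3" "i'<3" "i\<noteq>i'" for i i'
  proof -
    have "a i \<noteq> a i'" using ainj that by blast
    then show ?thesis using thr by simp
  qed
  have dleD: "d (a i) (c j) \<le> D" if "i<3" "j<3" for i j
    using dac[OF that] t1 tD by auto
  show ?thesis
  proof (cases "\<exists>i<3. \<exists>i'<3. i \<noteq> i' \<and> \<not> loc i \<and> \<not> loc i'")
    case True
    then obtain i i' where ii: "i<3" "i'<3" "i\<noteq>i'" "\<not> loc i" "\<not> loc i'" by blast
    have "alpha * wsm_loss lam d {a i, a i'} (c 0) m < L m" if "m \<in> {a i, a i'}" for m
    proof -
      have key: "alpha * wsm_loss lam d {a p, a p'} (c 0) (a p) < L (a p)"
        if "p<3" "p'<3" "p\<noteq>p'" "\<not> loc p" for p p'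
      proof -
        have "alpha * wsm_loss lam d {a p, a p'} (c 0) (a p) \<le> alpha * (lam*e + (1-lam)*D)"
          using pl[OF that(1-3)] dleD[of p 0] that lam a0 by (auto intro!: mult_left_mono)
        also have "\<dots> < (1-lam)*B" by (rule hBig)
        also have "\<dots> \<le> L (a p)" using nl that by blast
        finally show ?thesis .
      qed
      show ?thesis using that key[of i i'] key[of i' i] ii by (auto simp: insert_commute)
    qed
    moreover have "{a i, a i'} \<subseteq> N" using aN ii by auto
    moreover have "c 0 \<in> M" using cM by simp
    ultimately show ?thesis using crd[of i i'] ii unfolding L_def
      by (intro exI[of _ "{a i, a i'}"] exI[of _ "c 0"]) simp
  next
    case False
    then have h: "\<And>i i'. i<3 \<Longrightarrow> i'<3 \<Longrightarrow> i\<noteq>i' \<Longrightarrow> loc i \<or> loc i'" by blast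
    have "loc 0 \<or> loc 1" "loc 0 \<or> loc 2" "loc 1 \<or> loc 2" using h[of 0 1] h[of 0 2] h[of 1 2] by auto
    then consider "loc 0" "loc 1" | "loc 0" "loc 2" | "loc 1" "loc 2" by blast
    then obtain i i' where ii: "i<3" "i'<3" "i\<noteq>i'" "loc i" "loc i'"
    proof cases
      case 1 then show ?thesis using that[of 0 1] by simp
    next
      case 2 then show ?thesis using that[of 0 2] by simp
    next
      case 3 then show ?thesis using that[of 1 2] by simp
    qed
    have same: "\<tau> i = \<tau> i'" using uniq \<tau> ii unfolding loc_def by blast
    obtain j where j: "j<3" "X (\<tau> i) = c j" using ii unfolding loc_def by auto
    have lcm: "lam*e + (1-lam)*d (a m) (c j) \<le> L (a m)" if "m<3" "loc m" for m
    proof -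
      have tm: "\<tau> m = \<tau> i" using uniq \<tau> ii that unfolding loc_def by blast
      have "a i \<noteq> a i'" using ainj ii by blast
      then obtain b where "b \<in> C (\<tau> m)" "b \<noteq> a m" using tm same \<tau> ii by metis
      then show ?thesis using lc[OF that(1)] tm j by metis
    qed
    obtain q r :: nat where jqr: "(j=0 \<and> q=1 \<and> r=2) \<or> (j=1 \<and> q=2 \<and> r=0) \<or> (j=2 \<and> q=0 \<and> r=1)"
      using j by (metis less_2_cases_iff less_Suc_eq numeral_2_eq_2 numeral_3_eq_3 One_nat_def)
    have qr: "q < 3" "r < 3" "q \<noteq> r" using jqr by auto
    have dq: "d (a q) (c j) = t" "d (a q) (c q) = 1" using jqr dac by auto
    have dr: "d (a r) (c j) = D" "d (a r) (c q) = t" using jqr dac by auto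
    have Lq: "alpha * wsm_loss lam d {a q, a r} (c q) (a q) < L (a q)"
    proof (cases "loc q")
      case True
      have "alpha * wsm_loss lam d {a q, a r} (c q) (a q) = alpha * (lam*e + (1-lam)*1)"
        using pl[of q r] qr dq by simp
      also have "\<dots> < lam*e + (1-lam)*t" by (rule hA)
      also have "\<dots> \<le> L (a q)" using lcm[OF qr(1) True] dq by simp
      finally show ?thesis .
    next
      case False
      have "alpha * wsm_loss lam d {a q, a r} (c q) (a q) = alpha * (lam*e + (1-lam)*1)"
        using pl[of q r] qr dq by simp
      also have "\<dots> \<le> alpha * (lam*e + (1-lam)*D)"
      proof -
        have "(1-lam)*1 \<le> (1-lam)*D" using lam t1 tD by (intro mult_left_mono) auto
        then show ?thesis using a0 by (intro mult_left_mono) auto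
      qed
      also have "\<dots> < (1-lam)*B" by (rule hBig)
      also have "\<dots> \<le> L (a q)" using nl[OF qr(1) False] .
      finally show ?thesis .
    qed
    have Lr: "alpha * wsm_loss lam d {a q, a r} (c q) (a r) < L (a r)"
    proof -
      have w: "wsm_loss lam d {a q, a r} (c q) (a r) = lam*e + (1-lam)*t"
        using pl[of r q] qr dr by (simp add: insert_commute)
      show ?thesis
      proof (cases "loc r")
        case True
        have "alpha * (lam*e + (1-lam)*t) < lam*e + (1-lam)*D" by (rule hB)
        also have "\<dots> \<le> L (a r)" using lcm[OF qr(2) True] dr by simp
        finally show ?thesis using w by simp
      next
        case False
        have "(1-lam)*t \<le> (1-lam)*D" using lam tD by (intro mult_left_mono) auto
        then have "alpha * (lam*e + (1-lam)*t) \<le> alpha * (lam*e + (1-lam)*D)" using a0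
          by (intro mult_left_mono) auto
        also have "\<dots> < (1-lam)*B" by (rule hBig)
        also have "\<dots> \<le> L (a r)" using nl[OF qr(2) False] .
        finally show ?thesis using w by simp
      qed
    qed
    have "\<forall>m\<in>{a q, a r}. alpha * wsm_loss lam d {a q, a r} (c q) m < L m" using Lq Lr by simp
    moreover have "{a q, a r} \<subseteq> N" using aN qr by auto
    moreover have "c q \<in> M" using cM qr by simp
    ultimately show ?thesis using crd[OF qr] unfolding L_def
      by (intro exI[of _ "{a q, a r}"] exI[of _ "c q"]) simp
  qed
qed


definition acd :: "real \<Rightarrow> nat \<Rightarrow> nat \<Rightarrow> real" where
  "acd t i j = (if i = j then 1 else if (i,j) \<in> {(1,0),(2,1),(0,2)} then t else 2 + t)"

definition locd :: "real \<Rightarrow> nat \<Rightarrow> nat \<Rightarrow> real" where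
  "locd t p q = (if p = q then 0 else if p < 3 \<and> q < 3 then 1 + t
     else if 3 \<le> p \<and> 3 \<le> q then 1 + t
     else if p < 3 then acd t p (q - 3) else acd t q (p - 3))"

definition dd :: "real \<Rightarrow> real \<Rightarrow> nat \<Rightarrow> nat \<Rightarrow> real" where
  "dd t B p q = (if p div 6 = q div 6 then locd t (p mod 6) (q mod 6) else B)"

lemma less6: "(p::nat) < 6 \<Longrightarrow> p = 0 \<or> p = 1 \<or> p = 2 \<or> p = 3 \<or> p = 4 \<or> p = 5" by auto

lemma locd_tri:
  assumes "p < 6" "q < 6" "r < 6" "1 \<le> t"
  shows "locd t p r \<le> locd t p q + locd t q r"
  using less6[OF assms(1)] less6[OF assms(2)] less6[OF assms(3)] assms(4)
  by (elim disjE) (simp_all add: locd_def acd_def)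

lemma locd_sym:
  assumes "p < 6" "q < 6"
  shows "locd t p q = locd t q p"
  using less6[OF assms(1)] less6[OF assms(2)]
  by (elim disjE) (simp_all add: locd_def acd_def)

lemma locd_bnd:
  assumes "p < 6" "q < 6" "1 \<le> t"
  shows "0 \<le> locd t p q" "locd t p q \<le> 2 + t"
  using less6[OF assms(1)] less6[OF assms(2)] assms(3)
  by (elim disjE; simp add: locd_def acd_def)+

lemma dd_pm:
  assumes "1 \<le> t" "2 + t \<le> B"
  shows "pseudometric_on A (dd t B)"
  unfolding pseudometric_on_def
proof (intro conjI ballI)
  fix x show "dd t B x x = 0" by (simp add: dd_def locd_def)
next
  fix x y
  have b: "0 \<le> locd t (x mod 6) (y mod 6)" using locd_bnd assms by simp
  show "0 \<le> dd t B x y" using b assms by (simp add: dd_def)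
  show "dd t B x y = dd t B y x" using locd_sym[of "x mod 6" "y mod 6" t] by (auto simp: dd_def)
next
  fix x y z
  have b1: "0 \<le> locd t (x mod 6) (y mod 6)" "locd t (x mod 6) (y mod 6) \<le> 2 + t"
    using locd_bnd assms by simp_all
  have b2: "0 \<le> locd t (y mod 6) (z mod 6)" "locd t (y mod 6) (z mod 6) \<le> 2 + t"
    using locd_bnd assms by simp_all
  have b3: "0 \<le> locd t (x mod 6) (z mod 6)" "locd t (x mod 6) (z mod 6) \<le> 2 + t"
    using locd_bnd assms by simp_all
  have tr: "locd t (x mod 6) (z mod 6) \<le> locd t (x mod 6) (y mod 6) + locd t (y mod 6) (z mod 6)"
    using locd_tri assms by simp
  show "dd t B x z \<le> dd t B x y + dd t B y z"
    using b1 b2 b3 tr assms by (auto simp: dd_def)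
qed



lemma pigeon3:
  fixes X :: "nat \<Rightarrow> nat"
  assumes "\<not> (\<forall>\<tau><3. \<forall>\<tau>'<3. X \<tau> \<in> P \<longrightarrow> X \<tau>' \<in> P \<longrightarrow> \<tau> = \<tau>')"
    and "\<not> (\<forall>\<tau><3. \<forall>\<tau>'<3. X \<tau> \<in> Q \<longrightarrow> X \<tau>' \<in> Q \<longrightarrow> \<tau> = \<tau>')"
    and "P \<inter> Q = {}"
  shows False
proof -
  obtain a b where ab: "a<3" "b<3" "a\<noteq>b" "X a \<in> P" "X b \<in> P" using assms(1) by blast
  obtain c e where ce: "c<3" "e<3" "c\<noteq>e" "X c \<in> Q" "X e \<in> Q" using assms(2) by blast
  have "a = c \<or> a = e \<or> b = c \<or> b = e" using ab ce by arith
  then show False using ab ce assms(3) by auto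
qed

theorem mainTheorem9:
  fixes lam alpha :: real
  assumes "0 \<le> lam" and "lam \<le> 1"
    and "1 \<le> alpha"
    and "alpha < (sqrt (lam\<^sup>2 - 2 * lam + 5) - lam + 1) / 2"
  shows "\<exists>(N :: nat set) (M :: nat set) (k :: nat) (d :: nat \<Rightarrow> nat \<Rightarrow> real).
           finite N \<and> N \<noteq> {} \<and> finite M \<and> M \<noteq> {} \<and> 0 < k \<and>
           pseudometric_on (N \<union> M) d \<and>
           (\<forall>C X. \<not> in_alpha_core lam d N M k alpha C X)"
proof -
  have q: "alpha * alpha + (lam - 1) * alpha < 1" and l1: "lam < 1"
    using quad_from_bound[OF assms] by auto
  obtain t where t1: "1 \<le> t" and tA: "alpha * (1 + lam * t) < lam + t"
    and tB: "alpha * (lam + t) < 2 + t - lam"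
    using param_exists[OF assms(1) l1 assms(3) q] by blast
  define e where "e = 1 + t"
  define D where "D = 2 + t"
  define B where "B = (alpha * D + 1) / (1 - lam)"
  have hA: "alpha * (lam*e + (1-lam)*1) < lam*e + (1-lam)*t"
    using tA by (simp add: e_def algebra_simps)
  have hB: "alpha * (lam*e + (1-lam)*t) < lam*e + (1-lam)*D"
    using tB by (simp add: e_def D_def algebra_simps)
  have "lam*e + (1-lam)*D \<le> D" using assms(1) by (simp add: e_def D_def algebra_simps)
  then have "alpha * (lam*e + (1-lam)*D) \<le> alpha * D" using assms(3) by (intro mult_left_mono) auto
  also have "\<dots> < (1-lam)*B" using l1 by (simp add: B_def)
  finally have hBig: "alpha * (lam*e + (1-lam)*D) < (1-lam)*B" .
  have "1 * D \<le> alpha * D" using assms(3) t1 by (intro mult_right_mono) (auto simp: D_def)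
  then have "D \<le> alpha * D + 1" by simp
  also have "\<dots> \<le> (alpha * D + 1) / (1 - lam)"
    using l1 assms(1) assms(3) t1 by (simp add: D_def field_simps mult_left_le_one_le)
  finally have DB: "2 + t \<le> B" by (simp add: B_def D_def)
  define N :: "nat set" where "N = {0,1,2,6,7,8}"
  define M :: "nat set" where "M = {3,4,5,9,10,11}"
  define d where "d = dd t B"
  have cardN: "card N = 6" by (simp add: N_def)
  have thr: "real (card N) / real 3 \<le> 2" using cardN by simp
  show ?thesis
  proof (intro exI conjI allI)
    show "finite N" "N \<noteq> {}" "finite M" "M \<noteq> {}" "0 < (3::nat)" by (auto simp: N_def M_def)
    show "pseudometric_on (N \<union> M) d" unfolding d_def by (rule dd_pm[OF t1 DB])
    fix C X
    show "\<not> in_alpha_core lam d N M 3 alpha C X"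
    proof
      assume core: "in_alpha_core lam d N M 3 alpha C X"
      then have clus: "is_clustering N M 3 C X" by (simp add: in_alpha_core_def)
      have XM: "\<And>\<tau>. \<tau> < 3 \<Longrightarrow> X \<tau> \<in> M" using clus by (simp add: is_clustering_def)
      have blk: "\<exists>S y. S \<subseteq> N \<and> real (card S) \<ge> real (card N) / real 3 \<and> y \<in> M \<and>
          (\<forall>i\<in>S. alpha * wsm_loss lam d S y i < clustering_loss lam d 3 C X i)"
        if side: "s \<le> 1" and un: "\<forall>\<tau><3. \<forall>\<tau>'<3. X \<tau> \<in> (\<lambda>j. 6*s+3+j)`{..<3} \<longrightarrow> X \<tau>' \<in> (\<lambda>j. 6*s+3+j)`{..<3} \<longrightarrow> \<tau> = \<tau>'"
        for s :: nat
      proof (rule triangle_block[where a = "\<lambda>i. 6*s+i" and c = "\<lambda>j. 6*s+3+j" and e = e and D = D and B = B and t = t])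
        have s01: "s = 0 \<or> s = 1" using side by auto
        have i3: "\<And>i::nat. i < 3 \<Longrightarrow> i = 0 \<or> i = 1 \<or> i = 2" by auto
        show "is_clustering N M 3 C X" by (rule clus)
        show "finite N" by (simp add: N_def)
        show "\<And>i. i<3 \<Longrightarrow> 6*s+i \<in> N" using s01 i3 by (auto simp: N_def)
        show "\<And>i i'. i<3 \<Longrightarrow> i'<3 \<Longrightarrow> 6*s+i = 6*s+i' \<Longrightarrow> i = i'" by simp
        show "\<And>j. j<3 \<Longrightarrow> 6*s+3+j \<in> M" using s01 i3 by (auto simp: M_def)
        show "real (card N) / real 3 \<le> 2" by (rule thr)
        show "d (6*s+i) (6*s+i') = e" if "i<3" "i'<3" "i\<noteq>i'" for i i'
          using s01 i3[OF that(1)] i3[OF that(2)] that(3)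
          by (elim disjE) (simp_all add: d_def dd_def locd_def e_def)
        show "\<And>i. i<3 \<Longrightarrow> d (6*s+i) (6*s+i) = 0" by (simp add: d_def dd_def locd_def)
        show "d (6*s+i) (6*s+3+j) = (if i=j then 1 else if (i,j) \<in> {(1,0),(2,1),(0,2)} then t else D)"
          if "i<3" "j<3" for i j
          using s01 i3[OF that(1)] i3[OF that(2)]
          by (elim disjE) (simp_all add: d_def dd_def locd_def acd_def D_def)
        show "e \<le> d (6*s+i) b" if "i<3" "b\<in>N" "b \<noteq> 6*s+i" for i b
        proof -
          have "b = 0 \<or> b = 1 \<or> b = 2 \<or> b = 6 \<or> b = 7 \<or> b = 8" using that(2) by (simp add: N_def)
          then show ?thesis using s01 i3[OF that(1)] that(3) DB
            by (elim disjE) (simp_all add: d_def dd_def locd_def e_def)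
        qed
        show "\<And>\<tau> \<tau>'. \<tau><3 \<Longrightarrow> \<tau>'<3 \<Longrightarrow> X \<tau> \<in> (\<lambda>j. 6*s+3+j)`{..<3} \<Longrightarrow> X \<tau>' \<in> (\<lambda>j. 6*s+3+j)`{..<3} \<Longrightarrow> \<tau> = \<tau>'"
          using un by blast
        show "\<And>i \<tau>. i<3 \<Longrightarrow> \<tau><3 \<Longrightarrow> X \<tau> \<notin> (\<lambda>j. 6*s+3+j)`{..<3} \<Longrightarrow> B \<le> d (6*s+i) (X \<tau>)"
        proof -
          fix i \<tau> assume h: "i<(3::nat)" "\<tau><(3::nat)" "X \<tau> \<notin> (\<lambda>j. 6*s+3+j)`{..<3}"
          have "X \<tau> \<in> M" using XM h by simp
          then have "X \<tau> = 3 \<or> X \<tau> = 4 \<or> X \<tau> = 5 \<or> X \<tau> = 9 \<or> X \<tau> = 10 \<or> X \<tau> = 11"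
            by (simp add: M_def)
          moreover have "(6*s+i) div 6 = s" using h by simp
          moreover have "(\<lambda>j. 6*s+3+j)`{..<3} = {6*s+3, 6*s+4, 6*s+5}"
            by (auto simp: image_iff)
          ultimately have "X \<tau> div 6 \<noteq> (6*s+i) div 6"
            using h(3) s01 by (elim disjE) auto
          then show "B \<le> d (6*s+i) (X \<tau>)" by (simp add: d_def dd_def)
        qed
        show "0 \<le> lam" "lam \<le> 1" "0 \<le> alpha" "0 \<le> e" "1 \<le> t" "t \<le> D"
          using assms t1 by (auto simp: e_def D_def)
        show "alpha * (lam*e + (1-lam)*1) < lam*e + (1-lam)*t" by (rule hA)
        show "alpha * (lam*e + (1-lam)*t) < lam*e + (1-lam)*D" by (rule hB)
        show "alpha * (lam*e + (1-lam)*D) < (1-lam)*B" by (rule hBig)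
      qed
      have disj: "(\<lambda>j. 6*0+3+j)`{..<3} \<inter> (\<lambda>j. 6*1+3+j)`{..<(3::nat)} = {}" by auto
      have "(\<forall>\<tau><3. \<forall>\<tau>'<3. X \<tau> \<in> (\<lambda>j. 6*0+3+j)`{..<3} \<longrightarrow> X \<tau>' \<in> (\<lambda>j. 6*0+3+j)`{..<3} \<longrightarrow> \<tau> = \<tau>')
          \<or> (\<forall>\<tau><3. \<forall>\<tau>'<3. X \<tau> \<in> (\<lambda>j. 6*1+3+j)`{..<3} \<longrightarrow> X \<tau>' \<in> (\<lambda>j. 6*1+3+j)`{..<3} \<longrightarrow> \<tau> = \<tau>')"
        using pigeon3[OF _ _ disj, of X] by blast
      then have "\<exists>S y. S \<subseteq> N \<and> real (card S) \<ge> real (card N) / real 3 \<and> y \<in> M \<and>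
          (\<forall>i\<in>S. alpha * wsm_loss lam d S y i < clustering_loss lam d 3 C X i)"
        using blk[of 0] blk[of 1] by auto
      then show False using core by (simp add: in_alpha_core_def)
    qed
  qed
qed

end
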